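(* Let $0<\rho<1$ and $r>0$, let $a=\rho r/(1-\rho^2)$, and let $\phi(x)=1-e^{-a\|x\|}$ for $x\in\mathbb{R}^2$. Then for every $x\in\mathbb{R}^2$ with $\|x\|=r$, $$T_\rho\phi(x)\ge1-e^{-\frac{\rho^2r^2}{2(1-\rho^2)}}\int_0^\infty\gamma_1(t)\,dt-e^{\frac32\frac{\rho^2r^2}{1-\rho^2}}\int_{-\infty}^{-\frac{2\rho r}{\sqrt{1-\rho^2}}}\gamma_1(t)\,dt.$$
   Context: $\gamma_m$ is the standard Gaussian density on $\mathbb{R}^m$; $T_\rho u(x)=\int_{\mathbb{R}^2}u(\rho x+y\sqrt{1-\rho^2})\gamma_2(y)\,dy$. *)

theory Defs
  imports "HOL-Analysis.Analysis"
begin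

definition gamma1 :: "real \<Rightarrow> real" where
  "gamma1 t = exp (- t\<^sup>2 / 2) / sqrt (2 * pi)"

definition gamma2 :: "real^2 \<Rightarrow> real" where
  "gamma2 y = exp (- (norm y)\<^sup>2 / 2) / (2 * pi)"

definition T_rho :: "real \<Rightarrow> (real^2 \<Rightarrow> real) \<Rightarrow> real^2 \<Rightarrow> real" where
  "T_rho \<rho> u x = (\<integral>y. u (\<rho> *\<^sub>R x + sqrt (1 - \<rho>\<^sup>2) *\<^sub>R y) * gamma2 y \<partial>lborel)"

end

theory Submission
  imports Defs "HOL-Probability.Probability"
begin

lemma UNIV2: "(UNIV::2 set) = {1,2}"
  using exhaust_2 by auto

lemma box_vec2: "(x::real^2) \<in> box l u \<longleftrightarrow> l$1 < x$1 \<and> x$1 < u$1 \<and> l$2 < x$2 \<and> x$2 < u$2"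
  by (auto simp: mem_box Basis_vec_def inner_axis forall_2)

lemma vec2_eq: "(\<lambda>p::real\<times>real. vector [fst p, snd p] :: real^2) = (\<lambda>p. fst p *\<^sub>R axis 1 1 + snd p *\<^sub>R axis 2 1)"
  by (auto simp: vec_eq_iff forall_2 axis_def)

lemma e_meas[measurable]: "(\<lambda>p::real\<times>real. vector [fst p, snd p] :: real^2) \<in> borel_measurable (lborel \<Otimes>\<^sub>M lborel)"
  unfolding vec2_eq by measurable

lemma e_pres: "distr (lborel \<Otimes>\<^sub>M lborel) borel (\<lambda>p::real\<times>real. vector [fst p, snd p] :: real^2) = lborel"
proof (rule lborel_eqI[symmetric])
  fix l u :: "real^2"
  assume le: "\<And>b. b \<in> Basis \<Longrightarrow> l \<bullet> b \<le> u \<bullet> b"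
  have l1: "l$1 \<le> u$1" and l2: "l$2 \<le> u$2" using le[of "axis 1 1"] le[of "axis 2 1"]
    by (auto simp: Basis_vec_def inner_axis)
  have meas: "(\<lambda>p::real\<times>real. vector [fst p, snd p] :: real^2) \<in> borel_measurable (lborel \<Otimes>\<^sub>M lborel)"
    unfolding vec2_eq by measurable
  have pre: "(\<lambda>p::real\<times>real. vector [fst p, snd p] :: real^2) -` box l u \<inter> space (lborel \<Otimes>\<^sub>M lborel)
      = {l$1<..<u$1} \<times> {l$2<..<u$2}"
    by (auto simp: box_vec2 space_pair_measure)
  have pr: "(\<Prod>b\<in>Basis. (u - l) \<bullet> b) = (u$1 - l$1) * (u$2 - l$2)"
  proof -
    have "(\<Prod>b\<in>Basis. (u - l) \<bullet> b) = (\<Prod>i\<in>UNIV. (u - l) \<bullet> axis i (1::real))"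
    proof -
      have B: "(Basis :: (real^2) set) = range (\<lambda>i. axis i 1)" by (auto simp: Basis_vec_def)
      show ?thesis unfolding B by (subst prod.reindex) (auto simp: inj_on_def axis_eq_axis)
    qed
    also have "\<dots> = (u$1 - l$1) * (u$2 - l$2)"
      by (simp add: UNIV2 inner_axis)
    finally show ?thesis .
  qed
  show "emeasure (distr (lborel \<Otimes>\<^sub>M lborel) borel (\<lambda>p::real\<times>real. vector [fst p, snd p] :: real^2)) (box l u) = (\<Prod>b\<in>Basis. (u - l) \<bullet> b)"
    using l1 l2 by (simp add: emeasure_distr[OF meas] pre lborel.emeasure_pair_measure_Times pr ennreal_mult)
qed simp

lemma orth_pres:
  fixes Q :: "real^2 \<Rightarrow> real^2"
  assumes Q: "orthogonal_transformation Q"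
  shows "distr lborel borel Q = lborel"
proof (rule lborel_eqI[symmetric])
  have lin: "linear Q" using Q orthogonal_transformation_linear by blast
  have meas: "Q \<in> borel_measurable lborel"
    using borel_measurable_continuous_onI[OF linear_continuous_on[OF lin[unfolded linear_conv_bounded_linear]]] by simp
  fix l u :: "real^2"
  assume le: "\<And>b. b \<in> Basis \<Longrightarrow> l \<bullet> b \<le> u \<bullet> b"
  have bij: "bij Q" using Q orthogonal_transformation_bij by blast
  have pre: "Q -` box l u = inv Q ` box l u" using bij by (simp add: bij_vimage_eq_inv_image)
  have Qi: "orthogonal_transformation (inv Q)" using Q orthogonal_transformation_inv by blast
  have bl: "box l u \<in> lmeasurable" by simp
  have bor: "inv Q ` box l u \<in> sets lborel" 
  proof -
    have "Q -` box l u \<inter> space lborel \<in> sets lborel"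
      by (rule measurable_sets[OF meas]) simp
    then show ?thesis using pre by simp
  qed
  have fm: "inv Q ` box l u \<in> lmeasurable" using measurable_orthogonal_image[OF Qi bl] .
  have m: "measure lebesgue (inv Q ` box l u) = measure lebesgue (box l u)"
    using measure_orthogonal_image[OF Qi bl] .
  have "emeasure lborel (inv Q ` box l u) = emeasure lebesgue (inv Q ` box l u)"
    using bor by simp
  also have "\<dots> = ennreal (measure lebesgue (inv Q ` box l u))"
    using emeasure_eq_ennreal_measure[OF fmeasurableD2[OF fm]] .
  also have "\<dots> = ennreal (measure lebesgue (box l u))" using m by simp
  also have "\<dots> = emeasure lebesgue (box l u)"
    using emeasure_eq_ennreal_measure[OF fmeasurableD2[OF bl]] by simp
  also have "\<dots> = emeasure lborel (box l u)" by simp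
  finally have eq: "emeasure lborel (inv Q ` box l u) = emeasure lborel (box l u)" .
  show "emeasure (distr lborel borel Q) (box l u) = (\<Prod>b\<in>Basis. (u - l) \<bullet> b)"
    using le by (simp add: emeasure_distr[OF meas[unfolded measurable_lborel1]] pre eq emeasure_lborel_box_eq)
qed simp

lemma gamma1_std: "gamma1 = std_normal_density"
  by (auto simp: gamma1_def std_normal_density_def fun_eq_iff)

lemma gamma2_e: "gamma2 (vector [a, b]) = gamma1 a * gamma1 b"
proof -
  have n: "(norm (vector [a, b] :: real^2))\<^sup>2 = a\<^sup>2 + b\<^sup>2"
    by (simp only: power2_norm_eq_inner) (simp add: inner_vec_def sum_2 power2_eq_square)
  have e: "exp (- (a\<^sup>2 + b\<^sup>2) / 2) = exp (- a\<^sup>2 / 2) * exp (- b\<^sup>2 / 2)"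
    by (simp add: exp_add[symmetric] field_simps)
  have q: "sqrt (2 * pi) * sqrt (2 * pi) = 2 * pi" by simp
  show ?thesis unfolding gamma2_def gamma1_def n e
    by (simp only: times_divide_times_eq q)
qed

lemma gamma1_nn: "0 \<le> gamma1 t" by (simp add: gamma1_def)

lemma gamma2_nn: "0 \<le> gamma2 t" by (simp add: gamma2_def)

lemma prod_marg:
  fixes g :: "real \<Rightarrow> real"
  assumes [measurable]: "g \<in> borel_measurable borel"
  shows "(\<integral>z. g (z$1) * gamma2 z \<partial>lborel) = (\<integral>t. gamma1 t * g t \<partial>lborel)"
proof -
  define P where "P = density lborel (\<lambda>t. ennreal (gamma1 t))"
  have g1m[measurable]: "gamma1 \<in> borel_measurable borel" unfolding gamma1_def by measurable
  have g2m[measurable]: "gamma2 \<in> borel_measurable borel" unfolding gamma2_def by measurable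
  have Pp: "prob_space P" unfolding P_def gamma1_std by (rule prob_space_normal_density) simp
  then interpret P: prob_space P .
  have PP: "P \<Otimes>\<^sub>M P = density (lborel \<Otimes>\<^sub>M lborel) (\<lambda>p. ennreal (gamma1 (fst p) * gamma1 (snd p)))"
    unfolding P_def
  proof (subst pair_measure_density)
    show "sigma_finite_measure (lborel::real measure)" by (rule sigma_finite_lborel)
    show "sigma_finite_measure (density lborel (\<lambda>t. ennreal (gamma1 t)))"
      using P.sigma_finite_measure unfolding P_def .
    show "density (lborel \<Otimes>\<^sub>M lborel) (\<lambda>(x, y). ennreal (gamma1 x) * ennreal (gamma1 y)) =
      density (lborel \<Otimes>\<^sub>M lborel) (\<lambda>p. ennreal (gamma1 (fst p) * gamma1 (snd p)))"
      by (rule density_cong) (auto intro!: AE_I2 simp: ennreal_mult[symmetric] gamma1_nn)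
  qed auto
  have "(\<integral>z. g (z$1) * gamma2 z \<partial>lborel) = (\<integral>z. g (z$1) * gamma2 z \<partial>distr (lborel \<Otimes>\<^sub>M lborel) borel (\<lambda>p::real\<times>real. vector [fst p, snd p] :: real^2))"
    by (simp add: e_pres)
  also have "\<dots> = (\<integral>p. g (fst p) * (gamma1 (fst p) * gamma1 (snd p)) \<partial>(lborel \<Otimes>\<^sub>M lborel))"
    by (subst integral_distr) (auto simp: gamma2_e)
  also have "\<dots> = (\<integral>p. g (fst p) \<partial>(P \<Otimes>\<^sub>M P))"
    unfolding PP by (subst integral_density) (auto simp: mult.commute gamma1_nn intro!: AE_I2)
  also have "\<dots> = (\<integral>t. g t \<partial>distr (P \<Otimes>\<^sub>M P) P fst)"
    by (subst integral_distr) (auto simp: P_def)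
  also have "\<dots> = (\<integral>t. g t \<partial>P)" by (simp add: P.distr_pair_fst)
  also have "\<dots> = (\<integral>t. gamma1 t * g t \<partial>lborel)"
    unfolding P_def by (subst integral_density) (auto simp: gamma1_def)
  finally show ?thesis .
qed


lemma inner2: "(v::real^2) \<bullet> w = v$1 * w$1 + v$2 * w$2"
  by (simp add: inner_vec_def sum_2)

lemma marg:
  fixes u :: "real^2" and g :: "real \<Rightarrow> real"
  assumes u: "norm u = 1" and [measurable]: "g \<in> borel_measurable borel"
  shows "(\<integral>y. g (y \<bullet> u) * gamma2 y \<partial>lborel) = (\<integral>t. gamma1 t * g t \<partial>lborel)"
proof -
  define Q where "Q = (\<lambda>z::real^2. vector [u$1 * z$1 - u$2 * z$2, u$2 * z$1 + u$1 * z$2] :: real^2)"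
  have uu: "u$1 * u$1 + u$2 * u$2 = 1"
    using u by (metis inner2 norm_eq_1)
  have Q1: "Q z $ 1 = u$1 * z$1 - u$2 * z$2" and Q2: "Q z $ 2 = u$2 * z$1 + u$1 * z$2" for z
    by (simp_all add: Q_def)
  have lin: "linear Q"
    by (rule linearI) (auto simp: vec_eq_iff forall_2 Q1 Q2 algebra_simps)
  have ip: "Q v \<bullet> Q w = v \<bullet> w" for v w
  proof -
    have "Q v \<bullet> Q w = (u$1 * u$1 + u$2 * u$2) * (v$1 * w$1 + v$2 * w$2)"
      unfolding inner2 Q1 Q2 by algebra
    then show ?thesis by (simp add: uu inner2)
  qed
  have orth: "orthogonal_transformation Q"
    unfolding orthogonal_transformation_def using lin ip by blast
  have Qu: "Q z \<bullet> u = z$1" for z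
  proof -
    have "Q z \<bullet> u = (u$1 * u$1 + u$2 * u$2) * z$1" unfolding inner2 Q1 Q2 by algebra
    then show ?thesis by (simp add: uu)
  qed
  have gQ: "gamma2 (Q z) = gamma2 z" for z
    unfolding gamma2_def using orthogonal_transformation_norm[OF orth] by simp
  have meas: "Q \<in> borel_measurable lborel"
    using borel_measurable_continuous_onI[OF linear_continuous_on[OF lin[unfolded linear_conv_bounded_linear]]] by simp
  have g2m[measurable]: "gamma2 \<in> borel_measurable borel" unfolding gamma2_def by measurable
  have "(\<integral>y. g (y \<bullet> u) * gamma2 y \<partial>lborel) = (\<integral>y. g (y \<bullet> u) * gamma2 y \<partial>distr lborel borel Q)"
    by (simp add: orth_pres[OF orth])
  also have "\<dots> = (\<integral>z. g (Q z \<bullet> u) * gamma2 (Q z) \<partial>lborel)"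
    by (rule integral_distr) (use meas in auto)
  also have "\<dots> = (\<integral>z. g (z$1) * gamma2 z \<partial>lborel)"
    by (simp add: Qu gQ)
  also have "\<dots> = (\<integral>t. gamma1 t * g t \<partial>lborel)"
    by (rule prod_marg) simp
  finally show ?thesis .
qed


lemma nd1: "normal_density m 1 y = gamma1 (y - m)"
  by (simp add: normal_density_def gamma1_def)

lemma oneD:
  fixes c :: real
  assumes c: "c > 0"
  shows "(\<integral>t. gamma1 t * exp (- c * \<bar>c + t\<bar>) \<partial>lborel) \<le>
     exp (- c\<^sup>2 / 2) * (\<integral>t\<in>{0..}. gamma1 t \<partial>lborel)
     + exp (3/2 * c\<^sup>2) * (\<integral>t\<in>{..- (2 * c)}. gamma1 t \<partial>lborel)"
proof -
  define f1 where "f1 t = normal_density (-c) 1 t * indicator {-c<..} t" for t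
  define f2 where "f2 t = normal_density c 1 t * indicator {..-c} t" for t
  have i1: "integrable lborel f1" unfolding f1_def
    by (rule integrable_real_mult_indicator) auto
  have i2: "integrable lborel f2" unfolding f2_def
    by (rule integrable_real_mult_indicator) auto
  have pt: "gamma1 t * exp (- c * \<bar>c + t\<bar>) = exp (- c\<^sup>2 / 2) * f1 t + exp (3/2 * c\<^sup>2) * f2 t" for t
  proof (cases "t > -c")
    case True
    have "gamma1 t * exp (- c * \<bar>c + t\<bar>) = exp (- t\<^sup>2 / 2 + (- c * (c + t))) / sqrt (2 * pi)"
      using True by (simp add: gamma1_def mult_exp_exp)
    also have "- t\<^sup>2 / 2 + (- c * (c + t)) = - c\<^sup>2 / 2 + (- (t - - c)\<^sup>2 / 2)"
      by (simp add: power2_eq_square field_simps)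
    also have "exp (- c\<^sup>2 / 2 + (- (t - - c)\<^sup>2 / 2)) / sqrt (2 * pi) = exp (- c\<^sup>2 / 2) * normal_density (-c) 1 t"
      unfolding exp_add by (simp add: nd1 gamma1_def)
    finally show ?thesis using True by (simp add: f1_def f2_def)
  next
    case False
    have ab: "- c * \<bar>c + t\<bar> = c * (c + t)" using False by (simp add: algebra_simps)
    have "gamma1 t * exp (- c * \<bar>c + t\<bar>) = exp (- t\<^sup>2 / 2) * exp (c * (c + t)) / sqrt (2 * pi)"
      unfolding ab by (simp add: gamma1_def)
    also have "\<dots> = exp (- t\<^sup>2 / 2 + (c * (c + t))) / sqrt (2 * pi)"
      by (simp only: mult_exp_exp)
    also have "- t\<^sup>2 / 2 + (c * (c + t)) = 3/2 * c\<^sup>2 + (- (t - c)\<^sup>2 / 2)"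
      by (simp add: power2_eq_square field_simps)
    also have "exp (3/2 * c\<^sup>2 + (- (t - c)\<^sup>2 / 2)) / sqrt (2 * pi) = exp (3/2 * c\<^sup>2) * normal_density c 1 t"
      unfolding exp_add by (simp add: nd1 gamma1_def)
    finally show ?thesis using False by (simp add: f1_def f2_def)
  qed
  have "(\<integral>t. gamma1 t * exp (- c * \<bar>c + t\<bar>) \<partial>lborel)
      = (\<integral>t. exp (- c\<^sup>2 / 2) * f1 t + exp (3/2 * c\<^sup>2) * f2 t \<partial>lborel)"
    by (rule Bochner_Integration.integral_cong[OF refl pt])
  also have "\<dots> = exp (- c\<^sup>2 / 2) * (\<integral>t. f1 t \<partial>lborel) + exp (3/2 * c\<^sup>2) * (\<integral>t. f2 t \<partial>lborel)"
    using i1 i2 by simp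
  finally have eq: "(\<integral>t. gamma1 t * exp (- c * \<bar>c + t\<bar>) \<partial>lborel)
      = exp (- c\<^sup>2 / 2) * (\<integral>t. f1 t \<partial>lborel) + exp (3/2 * c\<^sup>2) * (\<integral>t. f2 t \<partial>lborel)" .
  have s1: "(\<integral>t. f1 t \<partial>lborel) = (\<integral>x. f1 (- c + 1 * x) \<partial>lborel)"
    using lborel_integral_real_affine[of 1 f1 "-c"] by simp
  also have "\<dots> = (\<integral>x. gamma1 x * indicator {0<..} x \<partial>lborel)"
    by (rule Bochner_Integration.integral_cong) (auto simp: f1_def nd1 indicator_def)
  also have "\<dots> \<le> (\<integral>t\<in>{0..}. gamma1 t \<partial>lborel)"
    unfolding set_lebesgue_integral_def
  proof (rule integral_mono)
    show "integrable lborel (\<lambda>x. gamma1 x * indicator {0<..} x)"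
      by (rule integrable_real_mult_indicator) (auto simp: gamma1_std)
    show "integrable lborel (\<lambda>x. indicator {0..} x *\<^sub>R gamma1 x)"
      using integrable_real_mult_indicator[of "{0..}" lborel gamma1]
      by (auto simp: gamma1_std mult.commute)
    show "gamma1 x * indicator {0<..} x \<le> indicator {0..} x *\<^sub>R gamma1 x" for x
      by (auto simp: indicator_def gamma1_nn)
  qed
  finally have b1: "(\<integral>t. f1 t \<partial>lborel) \<le> (\<integral>t\<in>{0..}. gamma1 t \<partial>lborel)" .
  have "(\<integral>t. f2 t \<partial>lborel) = (\<integral>x. f2 (c + 1 * x) \<partial>lborel)"
    using lborel_integral_real_affine[of 1 f2 "c"] by simp
  also have "\<dots> = (\<integral>t\<in>{..- (2 * c)}. gamma1 t \<partial>lborel)"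
    unfolding set_lebesgue_integral_def
    by (rule Bochner_Integration.integral_cong) (auto simp: f2_def nd1 indicator_def)
  finally have b2: "(\<integral>t. f2 t \<partial>lborel) = (\<integral>t\<in>{..- (2 * c)}. gamma1 t \<partial>lborel)" .
  show ?thesis unfolding eq b2
    using b1 by (simp add: mult_left_mono)
qed


theorem lemma7p1:
  fixes \<rho> r :: real and x :: "real^2"
  assumes "0 < \<rho>" "\<rho> < 1" "0 < r" "norm x = r"
  defines "a \<equiv> \<rho> * r / (1 - \<rho>\<^sup>2)"
  defines "\<phi> \<equiv> (\<lambda>z :: real^2. 1 - exp (- a * norm z))"
  shows "T_rho \<rho> \<phi> x \<ge>
           1 - exp (- (\<rho>\<^sup>2 * r\<^sup>2) / (2 * (1 - \<rho>\<^sup>2))) * (\<integral>t\<in>{0..}. gamma1 t \<partial>lborel)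
             - exp (3/2 * (\<rho>\<^sup>2 * r\<^sup>2 / (1 - \<rho>\<^sup>2)))
                 * (\<integral>t\<in>{..- (2 * \<rho> * r / sqrt (1 - \<rho>\<^sup>2))}. gamma1 t \<partial>lborel)"
proof -
  note rho = assms(1,2) and rpos = assms(3) and nx = assms(4)
  define s where "s = sqrt (1 - \<rho>\<^sup>2)"
  have r2: "\<rho>\<^sup>2 < 1" using rho by (simp add: power2_eq_square) (metis mult_strict_mono' less_eq_real_def mult_1 rho(1))
  have spos: "s > 0" unfolding s_def using r2 by simp
  have ss: "s * s = 1 - \<rho>\<^sup>2" unfolding s_def using r2 by simp
  define c where "c = \<rho> * r / s"
  have cpos: "c > 0" unfolding c_def using rho rpos spos by simp
  have sc: "s * c = \<rho> * r" unfolding c_def using spos by simp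
  have as: "a * s = c" unfolding a_def c_def using spos by (simp add: ss[symmetric] field_simps)
  have ann: "a \<ge> 0" unfolding a_def using rho rpos r2 by simp
  define u where "u = (1 / r) *\<^sub>R x"
  have nu: "norm u = 1" unfolding u_def using nx rpos by simp
  have xu: "x \<bullet> u = r" unfolding u_def using nx rpos
    by (simp add: power2_norm_eq_inner[symmetric] power2_eq_square)
  define E where "E y = exp (- a * norm (\<rho> *\<^sub>R x + s *\<^sub>R y))" for y
  define H where "H y = exp (- c * \<bar>c + y \<bullet> u\<bar>)" for y
  have EH: "E y \<le> H y" for y
  proof -
    have "(\<rho> *\<^sub>R x + s *\<^sub>R y) \<bullet> u = s * (c + y \<bullet> u)"
      using xu sc by (simp add: inner_add_left algebra_simps)
    moreover have "\<bar>(\<rho> *\<^sub>R x + s *\<^sub>R y) \<bullet> u\<bar> \<le> norm (\<rho> *\<^sub>R x + s *\<^sub>R y)"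
      using Cauchy_Schwarz_ineq2[of "\<rho> *\<^sub>R x + s *\<^sub>R y" u] nu by simp
    ultimately have "s * \<bar>c + y \<bullet> u\<bar> \<le> norm (\<rho> *\<^sub>R x + s *\<^sub>R y)"
      using spos by (simp add: abs_mult)
    then have "a * (s * \<bar>c + y \<bullet> u\<bar>) \<le> a * norm (\<rho> *\<^sub>R x + s *\<^sub>R y)"
      using ann by (rule mult_left_mono)
    then have "c * \<bar>c + y \<bullet> u\<bar> \<le> a * norm (\<rho> *\<^sub>R x + s *\<^sub>R y)"
      using as by (simp add: mult.assoc[symmetric])
    then show ?thesis unfolding E_def H_def by simp
  qed
  have g1int: "(\<integral>t. gamma1 t \<partial>lborel) = 1" by (simp add: gamma1_std)
  have g2m[measurable]: "gamma2 \<in> borel_measurable borel" unfolding gamma2_def by measurable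
  have g2int: "(\<integral>y. gamma2 y \<partial>lborel) = 1"
    using marg[OF nu, of "\<lambda>_. 1"] g1int by simp
  have ig2: "integrable lborel gamma2"
    using g2int not_integrable_integral_eq by fastforce
  have Em[measurable]: "E \<in> borel_measurable borel" unfolding E_def by measurable
  have Hm[measurable]: "H \<in> borel_measurable borel" unfolding H_def by measurable
  have iE: "integrable lborel (\<lambda>y. E y * gamma2 y)"
    by (rule Bochner_Integration.integrable_bound[OF ig2])
       (auto simp: E_def gamma2_nn abs_mult ann intro!: AE_I2 mult_left_le_one_le)
  have iH: "integrable lborel (\<lambda>y. H y * gamma2 y)"
    by (rule Bochner_Integration.integrable_bound[OF ig2])
       (auto simp: H_def gamma2_nn abs_mult intro!: AE_I2 mult_left_le_one_le mult_nonneg_nonneg cpos[THEN less_imp_le])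
  have T: "T_rho \<rho> \<phi> x = (\<integral>y. gamma2 y - E y * gamma2 y \<partial>lborel)"
    unfolding T_rho_def \<phi>_def E_def s_def by (simp add: left_diff_distrib)
  also have "\<dots> = 1 - (\<integral>y. E y * gamma2 y \<partial>lborel)"
    using ig2 iE g2int by simp
  finally have T1: "T_rho \<rho> \<phi> x = 1 - (\<integral>y. E y * gamma2 y \<partial>lborel)" .
  have "(\<integral>y. E y * gamma2 y \<partial>lborel) \<le> (\<integral>y. H y * gamma2 y \<partial>lborel)"
    by (rule integral_mono[OF iE iH]) (simp add: EH gamma2_nn mult_right_mono)
  also have "(\<integral>y. H y * gamma2 y \<partial>lborel) = (\<integral>t. gamma1 t * exp (- c * \<bar>c + t\<bar>) \<partial>lborel)"
    unfolding H_def by (rule marg[OF nu]) measurable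
  also have "\<dots> \<le> exp (- c\<^sup>2 / 2) * (\<integral>t\<in>{0..}. gamma1 t \<partial>lborel)
     + exp (3/2 * c\<^sup>2) * (\<integral>t\<in>{..- (2 * c)}. gamma1 t \<partial>lborel)"
    by (rule oneD[OF cpos])
  finally have B: "(\<integral>y. E y * gamma2 y \<partial>lborel) \<le> exp (- c\<^sup>2 / 2) * (\<integral>t\<in>{0..}. gamma1 t \<partial>lborel)
     + exp (3/2 * c\<^sup>2) * (\<integral>t\<in>{..- (2 * c)}. gamma1 t \<partial>lborel)" .
  have c2: "c\<^sup>2 = \<rho>\<^sup>2 * r\<^sup>2 / (1 - \<rho>\<^sup>2)"
  proof -
    have s2: "s\<^sup>2 = 1 - \<rho>\<^sup>2" using ss by (simp add: power2_eq_square)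
    show ?thesis unfolding c_def power_divide power_mult_distrib s2 ..
  qed
  have k1: "- (\<rho>\<^sup>2 * r\<^sup>2) / (2 * (1 - \<rho>\<^sup>2)) = - c\<^sup>2 / 2" unfolding c2 by simp
  have k2: "3/2 * (\<rho>\<^sup>2 * r\<^sup>2 / (1 - \<rho>\<^sup>2)) = 3/2 * c\<^sup>2" unfolding c2 by simp
  have k3: "2 * \<rho> * r / sqrt (1 - \<rho>\<^sup>2) = 2 * c" unfolding c_def s_def by simp
  show ?thesis unfolding T1 k1 k2 k3 using B by linarith
qed

end
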